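(* Let $w_1=a$, $w_2=b$, $w_3=ba$, $w_4=baabbaa$, and $w_n = b\cdot\mathit{TM}_{2n-8}\cdot\overline{\mathit{TM}_{2n-6}}\cdot\overline{\mathit{TM}_{2n-6}}'$ for $n\ge 5$. Then: (1) the infinite concatenation $w_1w_2w_3\cdots$ equals the infinite Thue–Morse word $\mathcal{TM}$, i.e. $\mathcal{TM}=\lim_{n\to\infty} w_1\cdots w_n$; (2) $w_n\preceq w_{n+1}$ for every $n\ge1$; (3) $w_n$ is a Nyldon word for every $n\ge 1$. In particular, $\mathcal{TM}$ admits a factorization into an infinite lexicographically non-decreasing sequence of Nyldon words.
   Context: Strings are over the binary alphabet $\{a,b\}$ ordered by $a \prec b$, and $\prec$ also denotes the induced lexicographic order on strings: $x \prec y$ iff $x$ is a proper prefix of $y$, or there is $i$ with $x[1..i-1]=y[1..i-1]$ and $x[i]\prec y[i]$; $x\preceq y$ means $x\prec y$ or $x=y$. Nyldon words are defined recursively: every string of length $1$ is a Nyldon word; a string $w$ with $|w|\ge 2$ is a Nyldon word iff there is no factorization $w=\gamma_1\cdots\gamma_m$ with $m\ge 2$, each $\gamma_i$ a nonempty Nyldon word, and $\gamma_1\preceq\gamma_2\preceq\cdots\preceq\gamma_m$. For a binary string $w$, $\overline{w}$ is obtained by exchanging $a$ and $b$ letterwise, and $w'$ is $w$ with its last letter removed; $\overline{w}'$ means $(\overline{w})'$. Thue–Morse words: $\mathit{TM}_0=a$ and $\mathit{TM}_k=\mathit{TM}_{k-1}\cdot\overline{\mathit{TM}_{k-1}}$ for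 $k\ge1$; the infinite Thue–Morse word is $\mathcal{TM}=\lim_{k\to\infty}\mathit{TM}_k$ (each $\mathit{TM}_k$ is a prefix of $\mathit{TM}_{k+1}$). *)

theory Defs
  imports Main
begin

datatype letter = A | B   (* A = a, B = b, with a < b *)

fun flip :: "letter \<Rightarrow> letter" where
  "flip A = B" | "flip B = A"

definition cmpl :: "letter list \<Rightarrow> letter list" where
  "cmpl w = map flip w"

fun lex_less :: "letter list \<Rightarrow> letter list \<Rightarrow> bool" where
  "lex_less [] ys = (ys \<noteq> [])"
| "lex_less (x # xs) [] = False"
| "lex_less (x # xs) (y # ys) = ((x = A \<and> y = B) \<or> (x = y \<and> lex_less xs ys))"

definition lex_le :: "letter list \<Rightarrow> letter list \<Rightarrow> bool" where
  "lex_le x y = (lex_less x y \<or> x = y)"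

(* nyl k w : Nyldon-ness for words of length at most k (recursion on the length bound) *)
primrec nyl :: "nat \<Rightarrow> letter list \<Rightarrow> bool" where
  "nyl 0 w = False"
| "nyl (Suc k) w = (length w \<le> Suc k \<and>
     (length w = 1 \<or>
      (length w \<ge> 2 \<and>
       \<not> (\<exists>gs. length gs \<ge> 2 \<and> concat gs = w \<and>
             (\<forall>g\<in>set gs. g \<noteq> [] \<and> nyl k g) \<and>
             (\<forall>i. Suc i < length gs \<longrightarrow> lex_le (gs ! i) (gs ! Suc i))))))"

definition nyldon :: "letter list \<Rightarrow> bool" where
  "nyldon w = nyl (length w) w"

primrec TM :: "nat \<Rightarrow> letter list" where
  "TM 0 = [A]"
| "TM (Suc k) = TM k @ cmpl (TM k)"

(* infinite Thue-Morse word, 0-indexed; TM (Suc i) has length 2^(i+1) > i *)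
definition tm_inf :: "nat \<Rightarrow> letter" where
  "tm_inf i = TM (Suc i) ! i"

definition wn :: "nat \<Rightarrow> letter list" where
  "wn n = (if n = 1 then [A]
           else if n = 2 then [B]
           else if n = 3 then [B, A]
           else if n = 4 then [B, A, A, B, B, A, A]
           else [B] @ TM (2*n - 8) @ cmpl (TM (2*n - 6)) @ butlast (cmpl (TM (2*n - 6))))"

end

theory Submission
  imports Defs
begin


lemma lex_less_irrefl: "\<not> lex_less x x"
  by (induct x) auto

lemma lex_less_trans: "lex_less x y \<Longrightarrow> lex_less y z \<Longrightarrow> lex_less x z"
proof (induct x arbitrary: y z)
  case Nil then show ?case by (cases y; cases z) auto
next
  case (Cons a x)
  then show ?case
    by (cases y; cases z) auto
qed

lemma lex_less_total: "lex_less x y \<or> x = y \<or> lex_less y x"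
proof (induct x arbitrary: y)
  case Nil then show ?case by (cases y) auto
next
  case (Cons a x) then show ?case
  proof (cases y)
    case (Cons b y')
    have "lex_less x y' \<or> x = y' \<or> lex_less y' x" using Cons.hyps by blast
    then show ?thesis using \<open>y = b # y'\<close> by (cases a; cases b) auto
  qed auto
qed

lemma lex_le_refl[simp]: "lex_le x x" by (simp add: lex_le_def)

lemma lex_le_trans: "lex_le x y \<Longrightarrow> lex_le y z \<Longrightarrow> lex_le x z"
  unfolding lex_le_def using lex_less_trans by blast

lemma lex_le_less_trans: "lex_le x y \<Longrightarrow> lex_less y z \<Longrightarrow> lex_less x z"
  unfolding lex_le_def using lex_less_trans by blast

lemma lex_less_le_trans: "lex_less x y \<Longrightarrow> lex_le y z \<Longrightarrow> lex_less x z"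
  unfolding lex_le_def using lex_less_trans by blast

lemma not_lex_less: "\<not> lex_less x y \<Longrightarrow> lex_le y x"
  unfolding lex_le_def using lex_less_total by blast

lemma lex_less_not_le: "lex_less x y \<Longrightarrow> \<not> lex_le y x"
  unfolding lex_le_def using lex_less_trans lex_less_irrefl by blast

lemma lex_less_prefix: "ys \<noteq> [] \<Longrightarrow> lex_less xs (xs @ ys)"
  by (induct xs) auto

lemma lex_less_same: "lex_less (p @ x) (p @ y) = lex_less x y"
  by (induct p) auto

lemma lex_less_mismatch: "lex_less (p @ A # x) (p @ B # y)"
  by (induct p) auto

fun chn :: "letter list list \<Rightarrow> bool" where
  "chn [] = True"
| "chn [x] = True"
| "chn (x # y # zs) = (lex_le x y \<and> chn (y # zs))"

lemma chn_eq: "chn gs = (\<forall>i. Suc i < length gs \<longrightarrow> lex_le (gs ! i) (gs ! Suc i))"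
proof (induct gs rule: chn.induct)
  case (3 x y zs)
  show ?case
  proof
    assume h: "chn (x # y # zs)"
    show "\<forall>i. Suc i < length (x # y # zs) \<longrightarrow> lex_le ((x # y # zs) ! i) ((x # y # zs) ! Suc i)"
    proof (intro allI impI)
      fix i assume "Suc i < length (x # y # zs)"
      then show "lex_le ((x # y # zs) ! i) ((x # y # zs) ! Suc i)"
        using h 3 by (cases i) auto
    qed
  next
    assume h: "\<forall>i. Suc i < length (x # y # zs) \<longrightarrow> lex_le ((x # y # zs) ! i) ((x # y # zs) ! Suc i)"
    have "lex_le x y" using h[rule_format, of 0] by simp
    moreover have "chn (y # zs)" using 3 h[rule_format, of "Suc i" for i] by auto
    ultimately show "chn (x # y # zs)" by simp
  qed
qed auto

lemma chn_snoc: "chn (xs @ [y]) = (chn xs \<and> (xs \<noteq> [] \<longrightarrow> lex_le (last xs) y))"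
  by (induct xs rule: chn.induct) auto

lemma chn_appendD1: "chn (xs @ ys) \<Longrightarrow> chn xs"
  by (induct xs rule: chn.induct) (auto simp: Cons_eq_append_conv)

lemma chn_pair: "chn [x, y] = lex_le x y" by simp

definition fct :: "letter list list \<Rightarrow> bool" where
  "fct gs = ((\<forall>g\<in>set gs. g \<noteq> [] \<and> nyldon g) \<and> chn gs)"

lemma nyl_mono: "length w \<le> k \<Longrightarrow> nyl k w = nyl (Suc k) w"
proof (induct k arbitrary: w)
  case 0 then show ?case by simp
next
  case (Suc k)
  have key: "\<And>gs. length gs \<ge> 2 \<Longrightarrow> concat gs = w \<Longrightarrow> (\<forall>g\<in>set gs. g \<noteq> []) \<Longrightarrow>
     (\<forall>g\<in>set gs. nyl k g = nyl (Suc k) g)"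
  proof
    fix gs g assume gs: "length gs \<ge> 2" "concat gs = w" "\<forall>g\<in>set gs. g \<noteq> []" and g: "g \<in> set gs"
    obtain xs ys where sp: "gs = xs @ g # ys" using g by (meson split_list)
    have "xs @ ys \<noteq> []" using gs(1) sp by auto
    then obtain h where h: "h \<in> set (xs @ ys)" by (cases "xs @ ys") auto
    then have "h \<noteq> []" using gs(3) sp by auto
    have "w = concat xs @ g @ concat ys" using gs(2) sp by simp
    then have "length w = length (concat xs) + length g + length (concat ys)"
      by simp
    moreover have "length h \<le> length (concat xs) + length (concat ys)"
    proof -
      have "h \<in> set xs \<or> h \<in> set ys" using h by auto
      then show ?thesis
      proof
        assume "h \<in> set xs"
        then obtain a b where "xs = a @ h # b" by (meson split_list)
        then show ?thesis by simp
      next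
        assume "h \<in> set ys"
        then obtain a b where "ys = a @ h # b" by (meson split_list)
        then show ?thesis by simp
      qed
    qed
    ultimately have "length g \<le> k" using Suc.prems \<open>h \<noteq> []\<close> by (cases h) auto
    then show "nyl k g = nyl (Suc k) g" using Suc.hyps by blast
  qed
  show ?case
  proof -
    have "(\<exists>gs. 2 \<le> length gs \<and> concat gs = w \<and> (\<forall>g\<in>set gs. g \<noteq> [] \<and> nyl k g) \<and>
          (\<forall>i. Suc i < length gs \<longrightarrow> lex_le (gs ! i) (gs ! Suc i))) =
          (\<exists>gs. 2 \<le> length gs \<and> concat gs = w \<and> (\<forall>g\<in>set gs. g \<noteq> [] \<and> nyl (Suc k) g) \<and>
          (\<forall>i. Suc i < length gs \<longrightarrow> lex_le (gs ! i) (gs ! Suc i)))"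
      using key by (metis (no_types, lifting))
    then show ?thesis using Suc.prems by (simp only: nyl.simps) simp
  qed
qed

lemma nyl_len: "length w \<le> k \<Longrightarrow> nyl k w = nyldon w"
proof (induct k)
  case 0 then show ?case by (simp add: nyldon_def)
next
  case (Suc k)
  then show ?case
    by (metis le_Suc_eq nyl_mono nyldon_def)
qed

lemma nyldon_iff: "nyldon w = (w \<noteq> [] \<and> \<not> (\<exists>gs. length gs \<ge> 2 \<and> concat gs = w \<and> fct gs))"
proof (cases w)
  case Nil then show ?thesis by (simp add: nyldon_def)
next
  case (Cons a w')
  have pieces: "\<And>gs g. length gs \<ge> 2 \<Longrightarrow> concat gs = w \<Longrightarrow> (\<forall>g\<in>set gs. g \<noteq> []) \<Longrightarrow> g \<in> set gs
       \<Longrightarrow> length g \<le> length w'"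
  proof -
    fix gs g assume gs: "length gs \<ge> 2" "concat gs = w" "\<forall>g\<in>set gs. g \<noteq> []" and g: "g \<in> set gs"
    obtain xs ys where sp: "gs = xs @ g # ys" using g by (meson split_list)
    have "xs @ ys \<noteq> []" using gs(1) sp by auto
    then obtain h where h: "h \<in> set xs \<or> h \<in> set ys" by (metis Un_iff set_append list.set_sel(1))
    then have "h \<noteq> []" using gs(3) sp by auto
    have "length h \<le> length (concat xs) + length (concat ys)"
      using h
    proof
      assume "h \<in> set xs"
      then obtain a b where "xs = a @ h # b" by (meson split_list)
      then show ?thesis by simp
    next
      assume "h \<in> set ys"
      then obtain a b where "ys = a @ h # b" by (meson split_list)
      then show ?thesis by simp
    qed
    moreover have "w = concat xs @ g @ concat ys" using gs(2) sp by simp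
    then have "length w = length (concat xs) + length g + length (concat ys)"
      by simp
    ultimately show "length g \<le> length w'" using Cons \<open>h \<noteq> []\<close> by (cases h) auto
  qed
  have len1: "\<And>gs. length gs \<ge> 2 \<Longrightarrow> concat gs = w \<Longrightarrow> (\<forall>g\<in>set gs. g \<noteq> []) \<Longrightarrow> length w \<ge> 2"
  proof -
    fix gs :: "letter list list" assume gs: "length gs \<ge> 2" "concat gs = w" "\<forall>g\<in>set gs. g \<noteq> []"
    obtain x y r where "gs = x # y # r" using gs(1)
      by (metis One_nat_def Suc_1 length_0_conv length_Cons list.exhaust not_less_eq_eq zero_le)
    then show "length w \<ge> 2" using gs by (cases x; cases y) auto
  qed
  have "nyldon w = nyl (Suc (length w')) w" using Cons by (simp add: nyldon_def)
  also have "\<dots> = (length w = 1 \<or> (length w \<ge> 2 \<and> \<not> (\<exists>gs. length gs \<ge> 2 \<and> concat gs = w \<and>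
             (\<forall>g\<in>set gs. g \<noteq> [] \<and> nyl (length w') g) \<and> chn gs)))"
    using Cons by (simp add: chn_eq)
  also have "\<dots> = (\<not> (\<exists>gs. length gs \<ge> 2 \<and> concat gs = w \<and> fct gs))"
  proof -
    have "(\<exists>gs. length gs \<ge> 2 \<and> concat gs = w \<and> (\<forall>g\<in>set gs. g \<noteq> [] \<and> nyl (length w') g) \<and> chn gs)
        = (\<exists>gs. length gs \<ge> 2 \<and> concat gs = w \<and> fct gs)"
      unfolding fct_def using pieces nyl_len by (metis (no_types, lifting))
    moreover have "length w = 1 \<Longrightarrow> \<not> (\<exists>gs. length gs \<ge> 2 \<and> concat gs = w \<and> fct gs)"
      using len1 unfolding fct_def by fastforce
    moreover have "length w \<noteq> 1 \<Longrightarrow> length w \<ge> 2" using Cons by (cases w') auto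
    ultimately show ?thesis by blast
  qed
  finally show ?thesis using Cons by simp
qed


lemma split_le: "a @ b = c @ d \<Longrightarrow> length d \<le> length b \<Longrightarrow> \<exists>y. b = y @ d \<and> a @ y = c"
  by (auto simp: append_eq_append_conv2)

lemma split_gt: assumes "a @ b = c @ d" "length b < length d" shows "\<exists>y. d = y @ b \<and> c @ y = a \<and> y \<noteq> []"
proof -
  obtain us where "(a = c @ us \<and> us @ b = d) \<or> (a @ us = c \<and> b = us @ d)"
    using append_eq_append_conv2[THEN iffD1, OF assms(1)] by blast
  then show ?thesis
  proof
    assume "a = c @ us \<and> us @ b = d" then show ?thesis using assms(2) by auto
  next
    assume "a @ us = c \<and> b = us @ d" then show ?thesis using assms(2) by auto
  qed
qed

lemma fct_single[simp]: "fct [w] = (w \<noteq> [] \<and> nyldon w)"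
  by (simp add: fct_def)

lemma fct_snoc: "fct (xs @ [y]) = (fct xs \<and> y \<noteq> [] \<and> nyldon y \<and> (xs \<noteq> [] \<longrightarrow> lex_le (last xs) y))"
  by (auto simp: fct_def chn_snoc)

lemma fct_last: "fct gs \<Longrightarrow> gs \<noteq> [] \<Longrightarrow> nyldon (last gs) \<and> last gs \<noteq> []"
  by (simp add: fct_def)

lemma fct_concat_nonempty: "fct gs \<Longrightarrow> gs \<noteq> [] \<Longrightarrow> concat gs \<noteq> []"
  by (cases gs) (auto simp: fct_def)

lemma fct_exists: "w \<noteq> [] \<Longrightarrow> \<exists>gs. fct gs \<and> gs \<noteq> [] \<and> concat gs = w"
proof (cases "nyldon w")
  case True
  assume "w \<noteq> []"
  then show ?thesis using True by (intro exI[of _ "[w]"]) simp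
next
  case False
  assume "w \<noteq> []"
  then obtain gs where "length gs \<ge> 2" "concat gs = w" "fct gs" using False nyldon_iff by blast
  then show ?thesis by (intro exI[of _ gs]) auto
qed

lemma nyldon_nonempty: "nyldon w \<Longrightarrow> w \<noteq> []"
  using nyldon_iff by blast

lemma not_nyldon_fct: "fct gs \<Longrightarrow> length gs \<ge> 2 \<Longrightarrow> \<not> nyldon (concat gs)"
  using nyldon_iff by blast

lemma fct_of_nyldon: "nyldon w \<Longrightarrow> fct gs \<Longrightarrow> concat gs = w \<Longrightarrow> gs = [w]"
proof -
  assume a: "nyldon w" "fct gs" "concat gs = w"
  have "gs \<noteq> []"
  proof
    assume "gs = []" then have "w = []" using a(3) by simp
    then show False using nyldon_nonempty a(1) by blast
  qed
  moreover have nl: "\<not> length gs \<ge> 2" using a not_nyldon_fct by blast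
  ultimately obtain g rest where gr: "gs = g # rest" by (cases gs) auto
  have "rest = []" using nl gr by (cases rest) auto
  then show ?thesis using a gr by simp
qed

lemma F:
  assumes "fct gs" "gs \<noteq> []" "concat gs = x @ q" "q \<noteq> []"
    and PH: "\<And>g x s. length g \<le> length (concat gs) \<Longrightarrow> g = x @ s \<Longrightarrow> x \<noteq> [] \<Longrightarrow> nyldon g \<Longrightarrow> nyldon s \<Longrightarrow> lex_less s g"
  shows "\<exists>es. fct es \<and> es \<noteq> [] \<and> concat es = q \<and> lex_le (last es) (last gs) \<and>
            (length q > length (last gs) \<longrightarrow> length es \<ge> 2)"
  using assms
proof (induct gs arbitrary: x q rule: rev_induct)
  case Nil then show ?case by simp
next
  case (snoc g hs)
  have fh: "fct hs" and g: "g \<noteq> []" "nyldon g" and ch: "hs \<noteq> [] \<Longrightarrow> lex_le (last hs) g"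
    using snoc.prems(1) fct_snoc by auto
  have cg: "concat hs @ g = x @ q" using snoc.prems(3) by simp
  show ?case
  proof (cases "length q \<le> length g")
    case True
    then obtain y where y: "g = y @ q" using split_le[OF cg] by blast
    show ?thesis
    proof (cases "y = []")
      case True
      then show ?thesis using y g by (intro exI[of _ "[g]"]) auto
    next
      case False
      obtain es where es: "fct es" "es \<noteq> []" "concat es = q" using fct_exists snoc.prems(4) by blast
      have "q = concat (butlast es) @ last es" using es
        by (metis append_butlast_last_id concat.simps(2) concat_append self_append_conv)
      then have gg: "g = (y @ concat (butlast es)) @ last es" using y by simp
      have "lex_less (last es) g"
      proof (rule snoc.prems(5)[OF _ gg])
        show "length g \<le> length (concat (hs @ [g]))" by simp
        show "y @ concat (butlast es) \<noteq> []" using False by simp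
        show "nyldon g" by fact
        show "nyldon (last es)" using fct_last es by blast
      qed
      then show ?thesis using es True unfolding lex_le_def by (intro exI[of _ es]) auto
    qed
  next
    case False
    then obtain q0 where q0: "q = q0 @ g" "x @ q0 = concat hs" "q0 \<noteq> []"
      using split_gt[OF cg] by auto
    have hsne: "hs \<noteq> []" using q0 by auto
    have "\<exists>es. fct es \<and> es \<noteq> [] \<and> concat es = q0 \<and> lex_le (last es) (last hs) \<and>
            (length q0 > length (last hs) \<longrightarrow> length es \<ge> 2)"
    proof (rule snoc.hyps[OF fh hsne q0(2)[symmetric] q0(3)])
      fix g' x' s' assume "length g' \<le> length (concat hs)" "g' = x' @ s'" "x' \<noteq> []" "nyldon g'" "nyldon s'"
      then show "lex_less s' g'" using snoc.prems(5)[of g' x' s'] by simp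
    qed
    then obtain es where es: "fct es" "es \<noteq> []" "concat es = q0" "lex_le (last es) (last hs)" by blast
    have "lex_le (last es) g" using es(4) ch[OF hsne] lex_le_trans by blast
    then have "fct (es @ [g])" using es g fct_snoc by auto
    moreover have "length (es @ [g]) \<ge> 2" using es(2) by (cases es) auto
    ultimately show ?thesis using es q0 by (intro exI[of _ "es @ [g]"]) auto
  qed
qed

lemma A':
  assumes "fct gs" "gs \<noteq> []" "concat gs = x @ q" "nyldon q"
    and PH: "\<And>g x s. length g \<le> length (concat gs) \<Longrightarrow> g = x @ s \<Longrightarrow> x \<noteq> [] \<Longrightarrow> nyldon g \<Longrightarrow> nyldon s \<Longrightarrow> lex_less s g"
  shows "length q \<le> length (last gs) \<and> lex_le q (last gs)"
proof -
  have ex: "\<exists>es. fct es \<and> es \<noteq> [] \<and> concat es = q \<and> lex_le (last es) (last gs) \<and>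
            (length q > length (last gs) \<longrightarrow> length es \<ge> 2)"
  proof (rule F)
    show "fct gs" "gs \<noteq> []" "concat gs = x @ q" by fact+
    show "q \<noteq> []" using nyldon_nonempty assms(4) by blast
  next
    fix g x s assume "length g \<le> length (concat gs)" "g = x @ s" "x \<noteq> []" "nyldon g" "nyldon s"
    then show "lex_less s g" by (rule PH)
  qed
  obtain es where es: "fct es" "es \<noteq> []" "concat es = q" "lex_le (last es) (last gs)"
     "length q > length (last gs) \<longrightarrow> length es \<ge> 2"
    using ex by blast
  have "es = [q]" using fct_of_nyldon[OF assms(4) es(1) es(3)] .
  then show ?thesis using es by auto
qed

lemma P: "nyldon w \<Longrightarrow> w = p @ s \<Longrightarrow> p \<noteq> [] \<Longrightarrow> nyldon s \<Longrightarrow> lex_less s w"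
proof (induct "length w" arbitrary: w p s rule: less_induct)
  case less
  note IH = less.hyps
  show ?case
  proof (rule ccontr)
    assume "\<not> lex_less s w"
    then have ws: "lex_le w s" using not_lex_less by blast
    define S where "S = (\<lambda>s'. \<exists>p'. w = p' @ s' \<and> p' \<noteq> [] \<and> nyldon s' \<and> lex_le w s')"
    have "S s" unfolding S_def using less.prems ws by blast
    moreover have "\<forall>y. S y \<longrightarrow> length y < Suc (length w)" unfolding S_def by auto
    ultimately obtain s where sS: "S s" and smax: "\<And>y. S y \<Longrightarrow> length y \<le> length s"
      using ex_has_greatest_nat[of S s length "Suc (length w)"] by blast
    from sS obtain p where ps: "w = p @ s" "p \<noteq> []" "nyldon s" "lex_le w s" unfolding S_def by blast
    obtain ds where ds: "fct ds" "ds \<noteq> []" "concat ds = p" using fct_exists ps(2) by blast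
    define d where "d = last ds"
    have dn: "nyldon d" "d \<noteq> []" using fct_last ds d_def by auto
    have sd: "lex_less s d"
    proof (rule ccontr)
      assume "\<not> lex_less s d"
      then have "lex_le d s" using not_lex_less by blast
      then have "fct (ds @ [s])" using ds ps(3) nyldon_nonempty d_def fct_snoc by auto
      moreover have "length (ds @ [s]) \<ge> 2" using ds(2) by (cases ds) auto
      moreover have "concat (ds @ [s]) = w" using ds ps by simp
      ultimately show False using not_nyldon_fct less.prems(1) by blast
    qed
    obtain d0 where d0: "ds = d0 @ [d]" using ds(2) d_def by (metis append_butlast_last_id)
    show False
    proof (cases "d0 = []")
      case True
      then have "p = d" using ds d0 by simp
      have "lex_less p w" using ps nyldon_nonempty lex_less_prefix by blast
      then have "lex_less p s" using ps(4) by (rule lex_less_le_trans)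
      then have "lex_less d d" using \<open>p = d\<close> sd lex_less_trans[of s d d] lex_less_trans[of d s d] by blast
      then show False using lex_less_irrefl by blast
    next
      case False
      have c0: "concat d0 \<noteq> []" using False ds(1) d0 fct_concat_nonempty fct_snoc by blast
      define t where "t = d @ s"
      have wt: "w = concat d0 @ t" using ds d0 ps t_def by simp
      have tlen: "length t < length w" using wt c0 by (cases "concat d0") auto
      obtain es where es: "fct es" "es \<noteq> []" "concat es = t" using fct_exists t_def dn by auto
      define e where "e = last es"
      have PH: "\<And>g x s. length g \<le> length (concat es) \<Longrightarrow> g = x @ s \<Longrightarrow> x \<noteq> [] \<Longrightarrow> nyldon g \<Longrightarrow> nyldon s \<Longrightarrow> lex_less s g"
      proof -
        fix g x s' assume h: "length g \<le> length (concat es)" "g = x @ s'" "x \<noteq> []" "nyldon g" "nyldon s'"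
        have "length g < length w" using h(1) es(3) tlen by simp
        then show "lex_less s' g" using IH h(2-5) by blast
      qed
      have A: "length s \<le> length e \<and> lex_le s e"
        using A'[OF es(1) es(2) _ ps(3) PH, of d] es(3) t_def e_def by simp
      have en: "nyldon e" "e \<noteq> []" using fct_last es e_def by auto
      obtain e0 where e0: "es = e0 @ [e]" using es(2) e_def by (metis append_butlast_last_id)
      have te: "t = concat e0 @ e" using es e0 by simp
      have "\<not> length e > length s"
      proof
        assume gt: "length e > length s"
        have "w = (concat d0 @ concat e0) @ e" using wt te by simp
        moreover have "concat d0 @ concat e0 \<noteq> []" using c0 by simp
        moreover have "lex_le w e" using ps(4) A lex_le_trans[of w s e] by blast
        ultimately have "S e" unfolding S_def using en by blast
        then show False using smax[of e] gt by simp
      qed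
      then have "length e = length s" using A by simp
      moreover have "concat e0 @ e = d @ s" using te t_def by simp
      ultimately have "concat e0 = d \<and> e = s" using append_eq_append_conv by blast
      then have "e = s" "concat e0 = d" by auto
      have "e0 \<noteq> []" using \<open>concat e0 = d\<close> dn by auto
      have fe0: "fct e0" and le0: "lex_le (last e0) e" using es(1) e0 fct_snoc \<open>e0 \<noteq> []\<close> by auto
      have "e0 = [d]" using fct_of_nyldon[OF dn(1) fe0 \<open>concat e0 = d\<close>] .
      then have "lex_le d s" using le0 \<open>e = s\<close> by simp
      then show False using sd lex_less_not_le by blast
    qed
  qed
qed


lemma A: assumes "fct gs" "gs \<noteq> []" "concat gs = x @ q" "nyldon q"
  shows "length q \<le> length (last gs) \<and> lex_le q (last gs)"
proof (rule A'[OF assms])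
  fix g x s assume "length g \<le> length (concat gs)" "g = x @ s" "x \<noteq> []" "nyldon g" "nyldon s"
  then show "lex_less s g" using P[of g x s] by simp
qed

definition good :: "letter list \<Rightarrow> letter list \<Rightarrow> bool" where
  "good w r = (nyldon w \<and> (\<forall>x q. w = x @ q \<longrightarrow> x \<noteq> [] \<longrightarrow> nyldon q \<longrightarrow> lex_le q r))"

lemma K:
  assumes "good u r" "lex_le r v" "nyldon v" "u = y @ u2" "y \<noteq> []" "u2 \<noteq> []"
  shows "\<not> nyldon (u2 @ v)"
proof -
  obtain ds where ds: "fct ds" "ds \<noteq> []" "concat ds = u2" using fct_exists assms(6) by blast
  obtain d0 d where dd: "ds = d0 @ [d]" using ds(2) by (metis append_butlast_last_id)
  have dn: "nyldon d" "d \<noteq> []" using fct_last[OF ds(1) ds(2)] dd by auto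
  have "u = (y @ concat d0) @ d" using assms(4) ds(3) dd by simp
  then have "lex_le d r" using assms(1) assms(5) dn unfolding good_def by blast
  then have dv: "lex_le d v" using assms(2) lex_le_trans by blast
  have ld: "last ds = d" using dd by simp
  have "fct (ds @ [v])"
    by (subst fct_snoc) (use ds(1) ds(2) ld dv assms(3) nyldon_nonempty in blast)
  moreover have "length (ds @ [v]) \<ge> 2" using ds(2) by (cases ds) auto
  moreover have "concat (ds @ [v]) = u2 @ v" using ds by simp
  ultimately show ?thesis using not_nyldon_fct by metis
qed

lemma H:
  assumes gu: "good u r" and gv: "good v r'" and vu: "lex_less v u" and rv: "lex_le r v"
  shows "good (u @ v) v"
proof -
  have nu: "nyldon u" and nv: "nyldon v" using gu gv good_def by auto
  have ny: "nyldon (u @ v)"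
  proof -
    have "\<not> (\<exists>gs. length gs \<ge> 2 \<and> concat gs = u @ v \<and> fct gs)"
    proof
      assume "\<exists>gs. length gs \<ge> 2 \<and> concat gs = u @ v \<and> fct gs"
      then obtain gs where gs: "length gs \<ge> 2" "concat gs = u @ v" "fct gs" by blast
      have gsne: "gs \<noteq> []" using gs(1) by auto
      obtain g0 g where gg: "gs = g0 @ [g]" using gsne by (metis append_butlast_last_id)
      have g0ne: "g0 \<noteq> []" using gs(1) gg by auto
      have "fct (g0 @ [g])" using gs(3) gg by simp
      then have fg0: "fct g0" and gn: "nyldon g" and lg: "lex_le (last g0) g"
        using fct_snoc g0ne by blast+
      have c: "concat g0 @ g = u @ v" using gs(2) gg by simp
      have "length v \<le> length g" using A[OF gs(3) gsne, of u v] gs(2) nv gg by simp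
      then consider "length v < length g" | "length v = length g" by linarith
      then show False
      proof cases
        case 1
        obtain y where y: "g = y @ v" "concat g0 @ y = u" "y \<noteq> []"
          using split_gt[OF c[symmetric] 1] by blast
        have "concat g0 \<noteq> []" using fct_concat_nonempty[OF fg0 g0ne] .
        then have "\<not> nyldon (y @ v)" using K[OF gu rv nv y(2)[symmetric]] y(3) by blast
        then show False using gn y(1) by simp
      next
        case 2
        then have "concat g0 = u \<and> g = v" using append_eq_append_conv[of "concat g0" u g v] c by simp
        then have "g0 = [u]" using fct_of_nyldon[OF nu fg0] by blast
        then have "lex_le u v" using lg \<open>concat g0 = u \<and> g = v\<close> by simp
        then show False using vu lex_less_not_le by blast
      qed
    qed
    moreover have "u @ v \<noteq> []" using nu nyldon_nonempty by simp
    ultimately show ?thesis using nyldon_iff by blast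
  qed
  have bd: "\<forall>x q. u @ v = x @ q \<longrightarrow> x \<noteq> [] \<longrightarrow> nyldon q \<longrightarrow> lex_le q v"
  proof (intro allI impI)
    fix x q assume h: "u @ v = x @ q" "x \<noteq> []" "nyldon q"
    show "lex_le q v"
    proof (cases "length v < length q")
      case True
      obtain y where y: "q = y @ v" "x @ y = u" "y \<noteq> []" using split_gt[OF h(1) True] by blast
      then have "\<not> nyldon q" using K[OF gu rv nv y(2)[symmetric] h(2) y(3)] by simp
      then show ?thesis using h(3) by blast
    next
      case False
      then have "length q \<le> length v" by simp
      then obtain y where y: "v = y @ q" "u @ y = x" using split_le[OF h(1)] by blast
      show ?thesis
      proof (cases "y = []")
        case True then show ?thesis using y by simp
      next
        case False
        have "lex_less q v" using P[OF nv y(1) False h(3)] .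
        then show ?thesis unfolding lex_le_def by simp
      qed
    qed
  qed
  show ?thesis using ny bd unfolding good_def by blast
qed

lemma good_mono: "good w r \<Longrightarrow> lex_le r r' \<Longrightarrow> good w r'"
  unfolding good_def using lex_le_trans by blast

lemma nyldon_letter: "nyldon [c]"
  by (simp add: nyldon_def)

lemma good_letter: "good [c] r"
  unfolding good_def
proof (intro conjI allI impI nyldon_letter)
  fix x q assume "[c] = x @ q" "x \<noteq> []" "nyldon q"
  then have "q = []" by (cases x) auto
  then show "lex_le q r" using \<open>nyldon q\<close> nyldon_nonempty by blast
qed

lemma good_nyldon: "good w r \<Longrightarrow> nyldon w" by (simp add: good_def)



lemma cmpl_append[simp]: "cmpl (x @ y) = cmpl x @ cmpl y" by (simp add: cmpl_def)
lemma cmpl_cmpl[simp]: "cmpl (cmpl x) = x"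
proof -
  have "flip (flip c) = c" for c by (cases c) auto
  then show ?thesis by (simp add: cmpl_def comp_def)
qed
lemma cmpl_Nil[simp]: "cmpl [] = []" by (simp add: cmpl_def)
lemma cmpl_Cons[simp]: "cmpl (c # x) = flip c # cmpl x" by (simp add: cmpl_def)
lemma length_cmpl[simp]: "length (cmpl x) = length x" by (simp add: cmpl_def)

lemma TM_len: "length (TM k) = 2 ^ k" by (induct k) auto

lemma TM_ne[simp]: "TM k \<noteq> []" by (induct k) auto

lemma TM_SS: "TM (Suc (Suc k)) = TM k @ cmpl (TM k) @ cmpl (TM k) @ TM k" by simp

lemma TM_hd: "\<exists>r. TM k = A # r" by (induct k) auto

lemma TM_last_even: "last (TM (2 * i)) = A"
proof (induct i)
  case 0 then show ?case by simp
next
  case (Suc i)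
  have "2 * Suc i = Suc (Suc (2 * i))" by simp
  then show ?case using Suc by (simp only: TM_SS) simp
qed

lemma TM_even_long: "0 < i \<Longrightarrow> \<exists>r. TM (2 * i) = A # r \<and> r \<noteq> []"
proof -
  assume "0 < i"
  obtain r where r: "TM (2 * i) = A # r" using TM_hd by blast
  have "length (TM (2 * i)) = 2 ^ (2 * i)" by (rule TM_len)
  moreover have "(2::nat) ^ (2 * i) \<ge> 2 ^ 2" using \<open>0 < i\<close> by (intro power_increasing) auto
  ultimately have "length r \<ge> 1" using r by simp
  then show ?thesis using r by (intro exI[of _ r]) auto
qed

fun blk :: "nat \<Rightarrow> letter \<Rightarrow> letter list" where
  "blk i A = TM (2 * i)"
| "blk i B = cmpl (TM (2 * i))"

definition h :: "nat \<Rightarrow> letter list \<Rightarrow> letter list" where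
  "h i z = concat (map (blk i) z)"

definition NN :: "nat \<Rightarrow> letter list \<Rightarrow> letter list" where
  "NN i z = B # butlast (h i z)"

fun mu2l :: "letter \<Rightarrow> letter list" where
  "mu2l A = [A, B, B, A]"
| "mu2l B = [B, A, A, B]"

definition mu2 :: "letter list \<Rightarrow> letter list" where
  "mu2 z = concat (map mu2l z)"

lemma h_Nil[simp]: "h i [] = []" by (simp add: h_def)
lemma h_Cons[simp]: "h i (c # z) = blk i c @ h i z" by (simp add: h_def)
lemma h_append[simp]: "h i (x @ y) = h i x @ h i y" by (simp add: h_def)
lemma mu2_Nil[simp]: "mu2 [] = []" by (simp add: mu2_def)
lemma mu2_Cons[simp]: "mu2 (c # z) = mu2l c @ mu2 z" by (simp add: mu2_def)
lemma mu2_append[simp]: "mu2 (x @ y) = mu2 x @ mu2 y" by (simp add: mu2_def)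

lemma blk_Suc: "blk (Suc i) c = h i (mu2l c)"
proof -
  have e: "2 * Suc i = Suc (Suc (2 * i))" by simp
  show ?thesis by (cases c) (simp_all only: blk.simps e TM_SS mu2l.simps, simp_all)
qed

lemma h_Suc: "h (Suc i) z = h i (mu2 z)"
  by (induct z) (simp_all add: blk_Suc)

lemma NN_Suc: "NN (Suc i) z = NN i (mu2 z)"
  by (simp add: NN_def h_Suc)

lemma blk_ne[simp]: "blk i c \<noteq> []" by (cases c) (auto simp: cmpl_def)

lemma h_ne: "z \<noteq> [] \<Longrightarrow> h i z \<noteq> []" by (cases z) auto

lemma h_last: "z \<noteq> [] \<Longrightarrow> last z = B \<Longrightarrow> last (h i z) = B"
proof (induct z)
  case Nil then show ?case by simp
next
  case (Cons c z)
  show ?case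
  proof (cases z)
    case Nil
    then have "c = B" using Cons by simp
    have "last (cmpl (TM (2 * i))) = B"
      using TM_last_even[of i] TM_ne[of "2*i"] by (simp add: cmpl_def last_map)
    then show ?thesis using Nil \<open>c = B\<close> by simp
  next
    case (Cons d z')
    then show ?thesis using Cons.hyps Cons.prems h_ne[of z i] by simp
  qed
qed

lemma NN_append:
  assumes "z1 \<noteq> []" "last z1 = B" "z2 \<noteq> []"
  shows "NN i (z1 @ z2) = NN i z1 @ NN i z2"
proof -
  have e1: "h i z1 = butlast (h i z1) @ [B]"
    using h_last[OF assms(1,2)] h_ne[OF assms(1)] by (metis append_butlast_last_id)
  have "butlast (h i z1 @ h i z2) = h i z1 @ butlast (h i z2)"
    using h_ne[OF assms(3)] by (simp add: butlast_append)
  then show ?thesis unfolding NN_def using e1 by (metis append.assoc append_Cons append_Nil h_append)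
qed

lemma NN_less_prefix:
  assumes "z \<noteq> []" "y \<noteq> []"
  shows "lex_less (NN i z) (NN i (z @ y))"
proof -
  have e1: "h i z = butlast (h i z) @ [last (h i z)]"
    using h_ne[OF assms(1)] by simp
  have "NN i (z @ y) = NN i z @ (last (h i z) # butlast (h i y))"
    unfolding NN_def using h_ne[OF assms(2)] e1 by (simp add: butlast_append)
  then show ?thesis using lex_less_prefix by simp
qed

lemma NN_less_mismatch:
  assumes "0 < i \<or> (x1 \<noteq> [] \<and> y1 \<noteq> [])"
  shows "lex_less (NN i (p @ A # x1)) (NN i (p @ B # y1))"
proof -
  obtain r where r: "TM (2 * i) = A # r" using TM_hd by blast
  have ne1: "r @ h i x1 \<noteq> []"
  proof (cases "0 < i")
    case True
    then obtain r' where "TM (2 * i) = A # r'" "r' \<noteq> []" using TM_even_long by blast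
    then show ?thesis using r by simp
  next
    case False then show ?thesis using assms h_ne by auto
  qed
  have ne2: "cmpl r @ h i y1 \<noteq> []"
  proof (cases "0 < i")
    case True
    then obtain r' where "TM (2 * i) = A # r'" "r' \<noteq> []" using TM_even_long by blast
    then show ?thesis using r by (simp add: cmpl_def)
  next
    case False then show ?thesis using assms h_ne by auto
  qed
  have "NN i (p @ A # x1) = (B # h i p) @ A # butlast (r @ h i x1)"
    unfolding NN_def using r ne1 by (simp add: butlast_append)
  moreover have "NN i (p @ B # y1) = (B # h i p) @ B # butlast (cmpl r @ h i y1)"
    unfolding NN_def using r ne2 by (simp add: butlast_append)
  ultimately show ?thesis using lex_less_mismatch by simp
qed



lemma NN_lt:
  assumes "take n z1 = take n z2" "z1 ! n = A" "z2 ! n = B" "n < length z1" "n < length z2"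
    and "0 < i \<or> (Suc n < length z1 \<and> Suc n < length z2)"
  shows "lex_less (NN i z1) (NN i z2)"
proof -
  have e1: "z1 = take n z1 @ A # drop (Suc n) z1" using assms(2,4) id_take_nth_drop by fastforce
  have e2: "z2 = take n z1 @ B # drop (Suc n) z2" using assms(1,3,5) id_take_nth_drop by fastforce
  have c: "0 < i \<or> (drop (Suc n) z1 \<noteq> [] \<and> drop (Suc n) z2 \<noteq> [])" using assms(6) by auto
  show ?thesis using NN_less_mismatch[OF c, of "take n z1"] e1 e2 by metis
qed

lemma NN_le:
  assumes "take n z1 = take n z2" "z1 ! n = A" "z2 ! n = B" "Suc n < length z1" "Suc n < length z2"
  shows "lex_le (NN i z1) (NN i z2)"
  using NN_lt[of n z1 z2 i] assms unfolding lex_le_def by simp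

abbreviation "zW \<equiv> [A,B,A,A,B,B,A,A,B]"
abbreviation "zU \<equiv> [A,B]"
abbreviation "zV \<equiv> [A,A,B,B,A,A,B]"
abbreviation "zA \<equiv> [A,B,B]"
abbreviation "zB \<equiv> [A,B,A,A,B]"
abbreviation "zC \<equiv> [A,A,B]"
abbreviation "zD \<equiv> [A,A,B,B]"
abbreviation "zE \<equiv> [A,B,B,A,A,B,B]"

definition Lev :: "nat \<Rightarrow> bool" where
  "Lev i = (good (NN (Suc i) zU) (NN i zB) \<and> good (NN (Suc i) zA) (NN i zW) \<and>
            good (NN (Suc i) zD) (NN i zW) \<and> good (NN (Suc i) zC) (NN i zB) \<and>
            good (NN (Suc i) zE) (NN i (mu2 zD)) \<and> good (NN (Suc i) zB) (NN i (mu2 zC)) \<and>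
            good (NN (Suc i) zV) (NN i (mu2 zC)) \<and> good (NN (Suc i) zW) (NN i (mu2 zV)))"

lemma Lev_step:
  assumes "Lev i" shows "Lev (Suc i)"
proof -
  let ?j = "Suc (Suc i)" and ?k = "Suc i"
  have gU: "good (NN ?k zU) (NN i zB)" and gA: "good (NN ?k zA) (NN i zW)"
    and gD: "good (NN ?k zD) (NN i zW)" and gC: "good (NN ?k zC) (NN i zB)"
    and gE: "good (NN ?k zE) (NN i (mu2 zD))" and gB: "good (NN ?k zB) (NN i (mu2 zC))"
    and gV: "good (NN ?k zV) (NN i (mu2 zC))" and gW: "good (NN ?k zW) (NN i (mu2 zV))"
    using assms unfolding Lev_def by auto
  have U: "good (NN ?j zU) (NN ?k zB)"
  proof -
    have "NN ?j zU = NN ?k (zA @ zB)" by (simp add: NN_Suc)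
    also have "\<dots> = NN ?k zA @ NN ?k zB" by (rule NN_append) simp_all
    finally have e: "NN ?j zU = NN ?k zA @ NN ?k zB" .
    have c1: "lex_less (NN ?k zB) (NN ?k zA)" by (rule NN_lt[of 2]) simp_all
    have c2: "lex_le (NN i zW) (NN ?k zB)" unfolding NN_Suc by (rule NN_le[of 2]) simp_all
    show ?thesis unfolding e by (rule H[OF gA gB c1 c2])
  qed
  have A: "good (NN ?j zA) (NN ?k zW)"
  proof -
    have "NN ?j zA = NN ?k (zA @ zW)" by (simp add: NN_Suc)
    also have "\<dots> = NN ?k zA @ NN ?k zW" by (rule NN_append) simp_all
    finally have e: "NN ?j zA = NN ?k zA @ NN ?k zW" .
    have c1: "lex_less (NN ?k zW) (NN ?k zA)" by (rule NN_lt[of 2]) simp_all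
    have c2: "lex_le (NN i zW) (NN ?k zW)" unfolding NN_Suc by (rule NN_le[of 2]) simp_all
    show ?thesis unfolding e by (rule H[OF gA gW c1 c2])
  qed
  have D: "good (NN ?j zD) (NN ?k zW)"
  proof -
    have "NN ?j zD = NN ?k (zE @ zW)" by (simp add: NN_Suc)
    also have "\<dots> = NN ?k zE @ NN ?k zW" by (rule NN_append) simp_all
    finally have e: "NN ?j zD = NN ?k zE @ NN ?k zW" .
    have c1: "lex_less (NN ?k zW) (NN ?k zE)" by (rule NN_lt[of 2]) simp_all
    have c2: "lex_le (NN i (mu2 zD)) (NN ?k zW)" unfolding NN_Suc by (rule NN_le[of 4]) simp_all
    show ?thesis unfolding e by (rule H[OF gE gW c1 c2])
  qed
  have C: "good (NN ?j zC) (NN ?k zB)"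
  proof -
    have "NN ?j zC = NN ?k (zE @ zB)" by (simp add: NN_Suc)
    also have "\<dots> = NN ?k zE @ NN ?k zB" by (rule NN_append) simp_all
    finally have e: "NN ?j zC = NN ?k zE @ NN ?k zB" .
    have c1: "lex_less (NN ?k zB) (NN ?k zE)" by (rule NN_lt[of 2]) simp_all
    have c2: "lex_le (NN i (mu2 zD)) (NN ?k zB)" unfolding NN_Suc by (rule NN_le[of 4]) simp_all
    show ?thesis unfolding e by (rule H[OF gE gB c1 c2])
  qed
  have E: "good (NN ?j zE) (NN ?k (mu2 zD))"
  proof -
    have e: "NN ?j zE = NN ?j zA @ NN ?j zD" using NN_append[of zA zD ?j] by simp
    have c1: "lex_less (NN ?j zD) (NN ?j zA)" by (rule NN_lt[of 1]) simp_all
    have c2: "lex_le (NN ?k zW) (NN ?j zD)" unfolding NN_Suc[of ?k] by (rule NN_le[of 2]) simp_all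
    have "good (NN ?j zE) (NN ?j zD)" unfolding e by (rule H[OF A D c1 c2])
    then show ?thesis unfolding NN_Suc[of ?k] .
  qed
  have B: "good (NN ?j zB) (NN ?k (mu2 zC))"
  proof -
    have e: "NN ?j zB = NN ?j zU @ NN ?j zC" using NN_append[of zU zC ?j] by simp
    have c1: "lex_less (NN ?j zC) (NN ?j zU)" by (rule NN_lt[of 1]) simp_all
    have c2: "lex_le (NN ?k zB) (NN ?j zC)" unfolding NN_Suc[of ?k] by (rule NN_le[of 2]) simp_all
    have "good (NN ?j zB) (NN ?j zC)" unfolding e by (rule H[OF U C c1 c2])
    then show ?thesis unfolding NN_Suc[of ?k] .
  qed
  have V: "good (NN ?j zV) (NN ?k (mu2 zC))"
  proof -
    have e: "NN ?j zV = NN ?j zD @ NN ?j zC" using NN_append[of zD zC ?j] by simp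
    have c1: "lex_less (NN ?j zC) (NN ?j zD)" using NN_less_prefix[of zC "[B]" ?j] by simp
    have c2: "lex_le (NN ?k zW) (NN ?j zC)" unfolding NN_Suc[of ?k] by (rule NN_le[of 2]) simp_all
    have "good (NN ?j zV) (NN ?j zC)" unfolding e by (rule H[OF D C c1 c2])
    then show ?thesis unfolding NN_Suc[of ?k] .
  qed
  have W: "good (NN ?j zW) (NN ?k (mu2 zV))"
  proof -
    have e: "NN ?j zW = NN ?j zU @ NN ?j zV" using NN_append[of zU zV ?j] by simp
    have c1: "lex_less (NN ?j zV) (NN ?j zU)" by (rule NN_lt[of 1]) simp_all
    have c2: "lex_le (NN ?k zB) (NN ?j zV)" unfolding NN_Suc[of ?k] by (rule NN_le[of 2]) simp_all
    have "good (NN ?j zW) (NN ?j zV)" unfolding e by (rule H[OF U V c1 c2])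
    then show ?thesis unfolding NN_Suc[of ?k] .
  qed
  show ?thesis unfolding Lev_def using U A D C E B V W by blast
qed

lemma cg0: "good [B,A] [A]"
  using H[OF good_letter[of B "[]"] good_letter[of A "[]"]] by (simp add: lex_le_def)

lemma cg1: "good [B,A,B] [B]"
  using H[OF cg0 good_letter[of B "[]"]] by (simp add: lex_le_def)

lemma cg2: "good [B,A,B,B,A] [B,A]"
  using H[OF cg1 cg0] by (simp add: lex_le_def)

lemma cg3: "good [B,A,A] [A]"
  using H[OF cg0 good_letter[of A "[]"]] by (simp add: lex_le_def)

lemma cg4: "good [B,A,B,B,A,B,A,A] [B,A,A]"
  using H[OF cg2 cg3] by (simp add: lex_le_def)

lemma cg5: "good [B,A,A,B] [B]"
  using H[OF cg3 good_letter[of B "[]"]] by (simp add: lex_le_def)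

lemma cg6: "good [B,A,A,B,B,A] [B,A]"
  using H[OF cg5 cg0] by (simp add: lex_le_def)

lemma cg7: "good [B,A,B,B,A,A,B,B,A] [B,A,A,B,B,A]"
  using H[OF cg1 cg6] by (simp add: lex_le_def)

lemma cg8: "good [B,A,A,B,B,A,A] [B,A,A]"
  using H[OF cg5 cg3] by (simp add: lex_le_def)

lemma cg9: "good [B,A,B,B,A,A,B,B,A,B,A,A,B,B,A,A] [B,A,A,B,B,A,A]"
  using H[OF cg7 cg8] by (simp add: lex_le_def)

lemma cg10: "good [B,A,A,B,B,A,B,A,A] [B,A,A]"
  using H[OF cg6 cg3] by (simp add: lex_le_def)

lemma cg11: "good [B,A,B,B,A,A,B,B,A,B,A,A] [B,A,A,B,B,A,B,A,A]"
  using H[OF cg1 cg10] by (simp add: lex_le_def)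

lemma cg12: "good [B,A,B,B,A,A,B,B,A,B,A,A,B,B,A,A,B,A,B,B,A,A,B,B,A,B,A,A] [B,A,B,B,A,A,B,B,A,B,A,A]"
  using H[OF cg9 cg11] by (simp add: lex_le_def)

lemma cg13: "good [B,A,B,B,A,B,A,A,B,A,B,B,A,A,B,B,A,B,A,A,B,B,A,A,B,A,B,B,A,A,B,B,A,B,A,A] [B,A,B,B,A,A,B,B,A,B,A,A,B,B,A,A,B,A,B,B,A,A,B,B,A,B,A,A]"
  using H[OF cg4 cg12] by (simp add: lex_le_def)

lemma cg14: "good [B,A,B,B,A,B,A,A,B,B,A,A] [B,A,A,B,B,A,A]"
  using H[OF cg2 cg8] by (simp add: lex_le_def)

lemma cg15: "good [B,A,B,B,A,B,A,A,B,A,B,B,A,A,B,B,A,B,A,A] [B,A,B,B,A,A,B,B,A,B,A,A]"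
  using H[OF cg4 cg11] by (simp add: lex_le_def)

lemma cg16: "good [B,A,B,B,A,B,A,A,B,B,A,A,B,A,B,B,A,A,B,B,A,B,A,A,B,B,A,A] [B,A,B,B,A,A,B,B,A,B,A,A,B,B,A,A]"
  using H[OF cg14 cg9] by (simp add: lex_le_def)


lemma NN0: "NN 0 z = B # butlast z"
proof -
  have "blk 0 c = [c]" for c by (cases c) simp_all
  then have "h 0 z = z" by (induct z) simp_all
  then show ?thesis unfolding NN_def by simp
qed

lemma Lev0: "Lev 0"
  unfolding Lev_def
proof (intro conjI)
  show "good (NN (Suc 0) zU) (NN 0 zB)" using good_mono[OF cg4] by (simp add: NN_Suc NN0 lex_le_def)
  show "good (NN (Suc 0) zA) (NN 0 zW)" using good_mono[OF cg14] by (simp add: NN_Suc NN0 lex_le_def)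
  show "good (NN (Suc 0) zD) (NN 0 zW)" using good_mono[OF cg9] by (simp add: NN_Suc NN0 lex_le_def)
  show "good (NN (Suc 0) zC) (NN 0 zB)" using good_mono[OF cg11] by (simp add: NN_Suc NN0 lex_le_def)
  show "good (NN (Suc 0) zE) (NN 0 (mu2 zD))" using good_mono[OF cg16] by (simp add: NN_Suc NN0 lex_le_def)
  show "good (NN (Suc 0) zB) (NN 0 (mu2 zC))" using good_mono[OF cg15] by (simp add: NN_Suc NN0 lex_le_def)
  show "good (NN (Suc 0) zV) (NN 0 (mu2 zC))" using good_mono[OF cg12] by (simp add: NN_Suc NN0 lex_le_def)
  show "good (NN (Suc 0) zW) (NN 0 (mu2 zV))" using good_mono[OF cg13] by (simp add: NN_Suc NN0 lex_le_def)
qed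

lemma Lev_all: "Lev i"
  by (induct i) (use Lev0 Lev_step in auto)

lemma nyldon_NN_W: "nyldon (NN (Suc i) zW)"
  using Lev_all[of i] good_nyldon unfolding Lev_def by blast



lemma h0: "h 0 z = z"
proof -
  have "blk 0 c = [c]" for c by (cases c) simp_all
  then show ?thesis by (induct z) simp_all
qed

lemma wn_NN: assumes "n \<ge> 5" shows "wn n = NN (n - 4) zW"
proof -
  define j where "j = n - 4"
  have j: "n = j + 4" "j \<ge> 1" using assms j_def by auto
  have e1: "2 * n - 8 = 2 * j" and e2: "2 * n - 6 = Suc (Suc (2 * j))" using j by auto
  have ne: "cmpl (TM (2 * j)) \<noteq> []" by (simp add: cmpl_def)
  have c2: "cmpl (TM (Suc (Suc (2 * j)))) = cmpl (TM (2*j)) @ TM (2*j) @ TM (2*j) @ cmpl (TM (2*j))"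
    by (simp only: TM_SS) simp
  have "wn n = [B] @ TM (2 * j) @ cmpl (TM (Suc (Suc (2 * j)))) @ butlast (cmpl (TM (Suc (Suc (2 * j)))))"
    using assms j unfolding wn_def e1 e2 by simp
  also have "\<dots> = NN j zW"
    unfolding NN_def c2 using ne by (simp add: butlast_append)
  finally show ?thesis using j by simp
qed

lemma wn_ne: "wn k \<noteq> []" by (simp add: wn_def)

lemma len_P: "length (concat (map wn [1..<Suc n])) \<ge> n"
proof (induct n)
  case 0 then show ?case by simp
next
  case (Suc n)
  have "[1..<Suc (Suc n)] = [1..<Suc n] @ [Suc n]" by simp
  then have "length (concat (map wn [1..<Suc (Suc n)])) = length (concat (map wn [1..<Suc n])) + length (wn (Suc n))"
    by simp
  moreover have "length (wn (Suc n)) \<ge> 1" using wn_ne[of "Suc n"] by (cases "wn (Suc n)") auto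
  ultimately show ?case using Suc by simp
qed

lemma TM_prefix: "\<exists>ys. TM (k + m) = TM k @ ys"
  by (induct m) auto

lemma lt_two_pow: "i < (2::nat) ^ i"
proof (induct i)
  case (Suc i)
  have "1 \<le> (2::nat) ^ i" by simp
  have "(2::nat) ^ Suc i = 2 ^ i + 2 ^ i" by simp
  then show ?case using Suc.hyps \<open>1 \<le> (2::nat) ^ i\<close> by linarith
qed simp

lemma nth_TM: assumes "i < length (TM k)" shows "TM k ! i = tm_inf i"
proof -
  obtain xs where xs: "TM (k + Suc i) = TM k @ xs" using TM_prefix by blast
  obtain ys where ys: "TM (Suc i + k) = TM (Suc i) @ ys" using TM_prefix by blast
  have "length (TM (Suc i)) = 2 ^ i + 2 ^ i" by (simp add: TM_len)
  then have l: "i < length (TM (Suc i))" using lt_two_pow[of i] by linarith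
  have ys': "TM (k + Suc i) = TM (Suc i) @ ys" using ys by (metis add.commute)
  have "TM k ! i = TM (k + Suc i) ! i" using xs assms by (metis nth_append)
  also have "\<dots> = TM (Suc i) ! i" using ys' l by (metis nth_append)
  finally show ?thesis by (simp add: tm_inf_def)
qed

lemma P_form: "concat (map wn [1..<Suc (n + 4)]) = butlast (h (Suc n) zA)"
proof (induct n)
  case 0
  have "concat (map wn [1..<Suc (0 + 4)]) = [A,B,B,A,B,A,A,B,B,A,A]"
    by (simp add: wn_def numeral_eq_Suc upt_rec)
  also have "\<dots> = butlast (h (Suc 0) zA)" by (simp only: h_Suc h0) simp
  finally show ?case .
next
  case (Suc n)
  have "[1..<Suc (Suc n + 4)] = [1..<Suc (n + 4)] @ [Suc n + 4]"
    using upt_Suc_append[of 1 "Suc n + 4"] by simp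
  then have "concat (map wn [1..<Suc (Suc n + 4)]) = butlast (h (Suc n) zA) @ wn (Suc n + 4)"
    using Suc by simp
  also have "wn (Suc n + 4) = NN (Suc n) zW" using wn_NN[of "Suc n + 4"] by simp
  also have "butlast (h (Suc n) zA) @ NN (Suc n) zW = h (Suc n) zA @ butlast (h (Suc n) zW)"
  proof -
    have "h (Suc n) zA = butlast (h (Suc n) zA) @ [B]"
      using h_last[of zA "Suc n"] h_ne[of zA "Suc n"] by (metis append_butlast_last_id list.distinct(1) last_ConsR last.simps)
    then show ?thesis unfolding NN_def by (metis append.assoc append_Cons append_Nil)
  qed
  also have "\<dots> = butlast (h (Suc n) (zA @ zW))"
    using h_ne[of zW "Suc n"] by (simp add: butlast_append)
  also have "\<dots> = butlast (h (Suc (Suc n)) zA)" by (simp add: h_Suc)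
  finally show ?case .
qed

lemma P_prefix: "\<exists>k ys. TM k = concat (map wn [1..<Suc n]) @ ys"
proof (cases "n \<ge> 4")
  case True
  then obtain m where m: "n = m + 4" by (metis add.commute le_Suc_ex)
  have "h (Suc m) [A,B,B,A] = TM (2 * Suc (Suc m))"
  proof -
    have "2 * Suc (Suc m) = Suc (Suc (2 * Suc m))" by simp
    then show ?thesis by (simp only: TM_SS) simp
  qed
  then have "TM (2 * Suc (Suc m)) = butlast (h (Suc m) zA) @ [last (h (Suc m) zA)] @ h (Suc m) [A]"
    using h_ne[of zA "Suc m"] by (metis append_butlast_last_id append_Cons append_Nil append_assoc h_append list.distinct(1))
  then show ?thesis using P_form[of m] m by (metis)
next
  case False
  then have "n = 0 \<or> n = 1 \<or> n = 2 \<or> n = 3" by auto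
  then show ?thesis
  proof (elim disjE)
    assume "n = 0" then show ?thesis by simp
  next
    assume "n = 1" then show ?thesis by (intro exI[of _ 2]) (simp add: wn_def numeral_eq_Suc cmpl_def)
  next
    assume "n = 2" then show ?thesis by (intro exI[of _ 2]) (simp add: wn_def numeral_eq_Suc upt_rec cmpl_def)
  next
    assume "n = 3" then show ?thesis by (intro exI[of _ 2]) (simp add: wn_def numeral_eq_Suc upt_rec cmpl_def)
  qed
qed

lemma part1: "concat (map wn [1..<Suc n]) = map tm_inf [0..<length (concat (map wn [1..<Suc n]))]"
proof -
  obtain k ys where k: "TM k = concat (map wn [1..<Suc n]) @ ys" using P_prefix by blast
  show ?thesis
  proof (rule nth_equalityI)
    fix i assume i: "i < length (concat (map wn [1..<Suc n]))"
    then have "concat (map wn [1..<Suc n]) ! i = TM k ! i" using k by (simp add: nth_append)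
    also have "\<dots> = tm_inf i" using i k by (intro nth_TM) simp
    finally show "concat (map wn [1..<Suc n]) ! i = map tm_inf [0..<length (concat (map wn [1..<Suc n]))] ! i"
      using i by simp
  qed simp
qed

lemma part3: "n \<ge> 1 \<Longrightarrow> lex_le (wn n) (wn (Suc n))"
proof -
  assume n: "n \<ge> 1"
  show ?thesis
  proof (cases "n \<ge> 5")
    case True
    have e1: "wn n = NN (n - 4) zW" using wn_NN True by blast
    have s: "Suc n - 4 = Suc (n - 4)" using True by arith
    have "wn (Suc n) = NN (Suc n - 4) zW" using wn_NN[of "Suc n"] True by simp
    then have e2: "wn (Suc n) = NN (n - 4) (mu2 zW)" unfolding s NN_Suc .
    have "lex_less (NN (n - 4) zW) (NN (n - 4) (mu2 zW))"
      by (rule NN_lt[of 2]) (use True in simp_all)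
    then show ?thesis unfolding e1 e2 lex_le_def by simp
  next
    case False
    then have "n = 1 \<or> n = 2 \<or> n = 3 \<or> n = 4" using n by auto
    then show ?thesis
    proof (elim disjE)
      assume "n = 4"
      have "wn 5 = NN (Suc 0) zW" using wn_NN[of 5] by simp
      then show ?thesis using \<open>n = 4\<close> by (simp add: NN_Suc NN0 wn_def lex_le_def numeral_eq_Suc)
    qed (simp_all add: wn_def lex_le_def)
  qed
qed

lemma part4: "n \<ge> 1 \<Longrightarrow> nyldon (wn n)"
proof -
  assume n: "n \<ge> 1"
  show ?thesis
  proof (cases "n \<ge> 5")
    case True
    have s: "n - 4 = Suc (n - 5)" using True by arith
    have "wn n = NN (n - 4) zW" using wn_NN[of n] True by simp
    then have "wn n = NN (Suc (n - 5)) zW" unfolding s .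
    then show ?thesis using nyldon_NN_W by simp
  next
    case False
    then have "n = 1 \<or> n = 2 \<or> n = 3 \<or> n = 4" using n by auto
    then show ?thesis
    proof (elim disjE)
      assume "n = 1" then show ?thesis by (simp add: wn_def nyldon_letter)
    next
      assume "n = 2" then show ?thesis by (simp add: wn_def nyldon_letter)
    next
      assume "n = 3" then show ?thesis using good_nyldon[OF cg0] by (simp add: wn_def)
    next
      assume "n = 4" then show ?thesis using good_nyldon[OF cg8] by (simp add: wn_def)
    qed
  qed
qed

theorem theorem6:
  shows "(\<forall>n. concat (map wn [1..<Suc n]) = map tm_inf [0..<length (concat (map wn [1..<Suc n]))])
       \<and> (\<forall>N. \<exists>n. length (concat (map wn [1..<Suc n])) \<ge> N)
       \<and> (\<forall>n\<ge>1. lex_le (wn n) (wn (Suc n)))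
       \<and> (\<forall>n\<ge>1. nyldon (wn n))"
  using part1 len_P part3 part4 by blast


end
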